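(* For every choice of $a>0$ and $b>0$, there exist smooth vector fields $u,v$ on $S^1=\mathbb{R}/\mathbb{Z}$ such that the sectional curvature of $\mathrm{Diff}(S^1)$ endowed with the right-invariant metric given at the identity by $\langle\!\langle u,v\rangle\!\rangle_{H^1}=\int_0^1(a\,uv+b\,u_xv_x)\,dx$ is strictly negative, i.e. $S(u,v)=\langle\!\langle R(u,v)v,u\rangle\!\rangle_{H^1}<0$.
   Context: $R$ is the Riemann curvature tensor of the Levi-Civita connection of the right-invariant metric, evaluated at the identity. *)

theory Defs
  imports "HOL-Analysis.Analysis"
begin

text \<open>Smooth vector fields on the circle S^1 = R/Z, represented as smooth 1-periodic
  real functions u (the vector field u(x) d/dx).\<close>

definition smooth_fun :: "(real \<Rightarrow> real) \<Rightarrow> bool" where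
  "smooth_fun f \<longleftrightarrow> (\<forall>n x. ((deriv ^^ n) f) differentiable (at x))"

definition vfS1 :: "(real \<Rightarrow> real) \<Rightarrow> bool" where
  "vfS1 u \<longleftrightarrow> smooth_fun u \<and> (\<forall>x. u (x + 1) = u x)"

definition H1_inner :: "real \<Rightarrow> real \<Rightarrow> (real \<Rightarrow> real) \<Rightarrow> (real \<Rightarrow> real) \<Rightarrow> real" where
  "H1_inner a b u v = integral {0..1} (\<lambda>x. a * u x * v x + b * deriv u x * deriv v x)"

text \<open>Lie bracket of the right-invariant vector fields generated by u and v
  (the usual bracket of vector fields on S^1).\<close>
definition vf_bracket :: "(real \<Rightarrow> real) \<Rightarrow> (real \<Rightarrow> real) \<Rightarrow> (real \<Rightarrow> real)" where
  "vf_bracket u v = (\<lambda>x. u x * deriv v x - deriv u x * v x)"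

text \<open>Levi-Civita connection of the right-invariant metric on right-invariant vector
  fields, evaluated at the identity, characterised by the Koszul formula
  (the metric is constant along right-invariant fields).\<close>
definition LC_conn :: "real \<Rightarrow> real \<Rightarrow> (real \<Rightarrow> real) \<Rightarrow> (real \<Rightarrow> real) \<Rightarrow> (real \<Rightarrow> real)" where
  "LC_conn a b u v = (THE w. vfS1 w \<and> (\<forall>z. vfS1 z \<longrightarrow>
      2 * H1_inner a b w z = H1_inner a b (vf_bracket u v) z
                             - H1_inner a b (vf_bracket u z) v
                             - H1_inner a b (vf_bracket v z) u))"

text \<open>Riemann curvature tensor at the identity, convention
  R(u,v)w = nabla_u nabla_v w - nabla_v nabla_u w - nabla_[u,v] w.\<close>
definition curv_R :: "real \<Rightarrow> real \<Rightarrow> (real \<Rightarrow> real) \<Rightarrow> (real \<Rightarrow> real) \<Rightarrow> (real \<Rightarrow> real) \<Rightarrow> (real \<Rightarrow> real)" where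
  "curv_R a b u v w = LC_conn a b u (LC_conn a b v w) - LC_conn a b v (LC_conn a b u w)
                      - LC_conn a b (vf_bracket u v) w"

definition sec_S :: "real \<Rightarrow> real \<Rightarrow> (real \<Rightarrow> real) \<Rightarrow> (real \<Rightarrow> real) \<Rightarrow> real" where
  "sec_S a b u v = H1_inner a b (curv_R a b u v v) u"

end

theory Submission
  imports Defs
begin

definition C1P :: "(real \<Rightarrow> real) \<Rightarrow> bool" where
  "C1P f \<longleftrightarrow> (\<forall>x. f differentiable (at x)) \<and> continuous_on UNIV (deriv f) \<and> (\<forall>x. f (x+1) = f x)"

lemma C1P_D: "C1P f \<Longrightarrow> (f has_real_derivative deriv f x) (at x)"
  unfolding C1P_def using DERIV_deriv_iff_real_differentiable by blast

lemma C1P_cont: "C1P f \<Longrightarrow> continuous_on UNIV f"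
  unfolding C1P_def by (meson differentiable_at_imp_differentiable_on differentiable_imp_continuous_on)

lemma C1P_per: "C1P f \<Longrightarrow> f (x+1) = f x"
  unfolding C1P_def by blast

lemma deriv_periodic:
  fixes f :: "real \<Rightarrow> real"
  assumes d: "\<And>x. f differentiable (at x)" and p: "\<And>x. f (x+1) = f x"
  shows "deriv f (x+1) = deriv f x"
proof -
  have "(f has_real_derivative deriv f (x+1)) (at (x+1))"
    using d DERIV_deriv_iff_real_differentiable by blast
  then have "((\<lambda>y. f (y+1)) has_real_derivative deriv f (x+1)) (at x)"
    using DERIV_shift by blast
  moreover have "(\<lambda>y. f (y+1)) = f" using p by auto
  ultimately show ?thesis using DERIV_imp_deriv by metis
qed

lemma vfS1_deriv: "vfS1 f \<Longrightarrow> vfS1 (deriv f)"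
proof -
  assume a: "vfS1 f"
  have sm: "smooth_fun (deriv f)"
    using a unfolding vfS1_def smooth_fun_def
    by (metis comp_apply funpow_Suc_right)
  have d: "\<And>x. f differentiable (at x)" using a unfolding vfS1_def smooth_fun_def
    by (metis funpow_0)
  show ?thesis using sm deriv_periodic[OF d] a unfolding vfS1_def by blast
qed

lemma vfS1_C1P: "vfS1 f \<Longrightarrow> C1P f"
proof -
  assume a: "vfS1 f"
  have d: "\<And>x. f differentiable (at x)" using a unfolding vfS1_def smooth_fun_def
    by (metis funpow_0)
  have d2: "deriv f differentiable (at x)" for x
  proof -
    have "((deriv^^1) f) differentiable (at x)" using a unfolding vfS1_def smooth_fun_def by blast
    then show ?thesis by simp
  qed
  have "continuous_on UNIV (deriv f)"
    using d2 by (meson differentiable_at_imp_differentiable_on differentiable_imp_continuous_on)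
  then show ?thesis using d a unfolding C1P_def vfS1_def by blast
qed

lemma C1P_add: "C1P f \<Longrightarrow> C1P g \<Longrightarrow> C1P (\<lambda>x. f x + g x) \<and> deriv (\<lambda>x. f x + g x) = (\<lambda>x. deriv f x + deriv g x)"
proof -
  assume f: "C1P f" and g: "C1P g"
  have D: "deriv (\<lambda>x. f x + g x) = (\<lambda>x. deriv f x + deriv g x)"
    by (rule ext, rule DERIV_imp_deriv, intro derivative_intros C1P_D f g)
  moreover have "C1P (\<lambda>x. f x + g x)"
    unfolding C1P_def D using f g unfolding C1P_def
    by (auto intro!: continuous_intros)
  ultimately show ?thesis by blast
qed

lemma C1P_diff: "C1P f \<Longrightarrow> C1P g \<Longrightarrow> C1P (\<lambda>x. f x - g x) \<and> deriv (\<lambda>x. f x - g x) = (\<lambda>x. deriv f x - deriv g x)"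
proof -
  assume f: "C1P f" and g: "C1P g"
  have D: "deriv (\<lambda>x. f x - g x) = (\<lambda>x. deriv f x - deriv g x)"
    by (rule ext, rule DERIV_imp_deriv, intro derivative_intros C1P_D f g)
  moreover have "C1P (\<lambda>x. f x - g x)"
    unfolding C1P_def D using f g unfolding C1P_def
    by (auto intro!: continuous_intros)
  ultimately show ?thesis by blast
qed

lemma C1P_mult: "C1P f \<Longrightarrow> C1P g \<Longrightarrow> C1P (\<lambda>x. f x * g x) \<and> deriv (\<lambda>x. f x * g x) = (\<lambda>x. deriv f x * g x + f x * deriv g x)"
proof -
  assume f: "C1P f" and g: "C1P g"
  have D: "deriv (\<lambda>x. f x * g x) = (\<lambda>x. deriv f x * g x + f x * deriv g x)"
    by (rule ext, rule DERIV_imp_deriv, rule derivative_eq_intros, rule C1P_D[OF f], rule C1P_D[OF g], simp)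
  moreover have "C1P (\<lambda>x. f x * g x)"
    unfolding C1P_def D using f g C1P_cont[OF f] C1P_cont[OF g] unfolding C1P_def
    by (auto intro!: continuous_intros)
  ultimately show ?thesis by blast
qed

lemma C1P_cmult: "C1P f \<Longrightarrow> C1P (\<lambda>x. c * f x) \<and> deriv (\<lambda>x. c * f x) = (\<lambda>x. c * deriv f x)"
proof -
  assume f: "C1P f"
  have D: "deriv (\<lambda>x. c * f x) = (\<lambda>x. c * deriv f x)"
    by (rule ext, rule DERIV_imp_deriv, rule DERIV_cmult, rule C1P_D[OF f])
  moreover have "C1P (\<lambda>x. c * f x)"
    unfolding C1P_def D using f unfolding C1P_def
    by (auto intro!: continuous_intros)
  ultimately show ?thesis by blast
qed

lemma cont_int: "continuous_on UNIV (f::real\<Rightarrow>real) \<Longrightarrow> f integrable_on {0..(1::real)}"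
  by (rule integrable_continuous_interval, rule continuous_on_subset[of UNIV], assumption, simp)

lemma ibp:
  assumes f: "C1P f" and g: "C1P g"
  shows "integral {0..1} (\<lambda>x. f x * deriv g x) = - integral {0..1} (\<lambda>x. deriv f x * g x)"
proof -
  have "((\<lambda>x. deriv f x * g x + f x * deriv g x) has_integral (f 1 * g 1 - f 0 * g 0)) {0..1}"
    apply (rule fundamental_theorem_of_calculus)
     apply simp
    apply (unfold has_real_derivative_iff_has_vector_derivative[symmetric])
    apply (rule DERIV_subset[of _ _ _ UNIV])
    apply (rule derivative_eq_intros, rule C1P_D[OF f], rule C1P_D[OF g])
    by auto
  moreover have "f 1 * g 1 - f 0 * g 0 = 0"
    using C1P_per[OF f, of 0] C1P_per[OF g, of 0] by simp
  ultimately have "integral {0..1} (\<lambda>x. deriv f x * g x + f x * deriv g x) = 0"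
    by (simp add: integral_unique)
  moreover have "integral {0..1} (\<lambda>x. deriv f x * g x + f x * deriv g x)
     = integral {0..1} (\<lambda>x. deriv f x * g x) + integral {0..1} (\<lambda>x. f x * deriv g x)"
    apply (rule integral_add)
    using f g C1P_cont[OF f] C1P_cont[OF g] unfolding C1P_def
    by (auto intro!: cont_int continuous_intros)
  ultimately show ?thesis by linarith
qed



lemma K1:
  assumes w: "C1P w" and w1: "C1P (deriv w)" and z: "C1P z"
  shows "H1_inner a b w z = integral {0..1} (\<lambda>x. (a * w x - b * deriv (deriv w) x) * z x)"
proof -
  have cw: "continuous_on UNIV w" "continuous_on UNIV (deriv w)" "continuous_on UNIV (deriv (deriv w))"
    "continuous_on UNIV z" "continuous_on UNIV (deriv z)"
    using w w1 z C1P_cont unfolding C1P_def by auto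
  have "H1_inner a b w z = integral {0..1} (\<lambda>x. a * (w x * z x)) + integral {0..1} (\<lambda>x. b * (deriv w x * deriv z x))"
    unfolding H1_inner_def
    by (subst integral_add[symmetric]) (auto intro!: cont_int continuous_intros cw simp: algebra_simps)
  also have "\<dots> = a * integral {0..1} (\<lambda>x. w x * z x) + b * integral {0..1} (\<lambda>x. deriv w x * deriv z x)"
    by simp
  also have "integral {0..1} (\<lambda>x. deriv w x * deriv z x) = - integral {0..1} (\<lambda>x. deriv (deriv w) x * z x)"
    by (rule ibp[OF w1 z])
  also have "a * integral {0..1} (\<lambda>x. w x * z x) + b * - integral {0..1} (\<lambda>x. deriv (deriv w) x * z x)
     = integral {0..1} (\<lambda>x. a * (w x * z x)) - integral {0..1} (\<lambda>x. b * (deriv (deriv w) x * z x))"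
    by simp
  also have "\<dots> = integral {0..1} (\<lambda>x. (a * w x - b * deriv (deriv w) x) * z x)"
    by (subst integral_diff[symmetric]) (auto intro!: cont_int continuous_intros cw simp: algebra_simps)
  finally show ?thesis .
qed

lemma H1_sym: "H1_inner a b f g = H1_inner a b g f"
  unfolding H1_inner_def by (simp add: ac_simps)

lemma vfS1_all:
  assumes "vfS1 X"
  shows "C1P X" "C1P (deriv X)" "C1P (deriv (deriv X))" "C1P (deriv (deriv (deriv X)))"
  using assms vfS1_C1P vfS1_deriv by blast+

lemma K2:
  assumes X: "vfS1 X" and Y: "vfS1 Y" and z: "vfS1 z"
  shows "H1_inner a b (vf_bracket X z) Y = - integral {0..1} (\<lambda>x. z x * (2 * deriv X x * (a * Y x - b * deriv (deriv Y) x)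
            + X x * (a * deriv Y x - b * deriv (deriv (deriv Y)) x)))"
proof -
  note x = vfS1_all[OF X] and y = vfS1_all[OF Y] and zz = vfS1_all[OF z]
  define AY where "AY = (\<lambda>x. a * Y x - b * deriv (deriv Y) x)"
  have AY: "C1P AY" "deriv AY = (\<lambda>x. a * deriv Y x - b * deriv (deriv (deriv Y)) x)"
  proof -
    have 1: "C1P (\<lambda>x. a * Y x)" "deriv (\<lambda>x. a * Y x) = (\<lambda>x. a * deriv Y x)" using C1P_cmult[OF y(1)] by auto
    have 2: "C1P (\<lambda>x. b * deriv (deriv Y) x)" "deriv (\<lambda>x. b * deriv (deriv Y) x) = (\<lambda>x. b * deriv (deriv (deriv Y)) x)"
      using C1P_cmult[OF y(3)] by auto
    show "C1P AY" "deriv AY = (\<lambda>x. a * deriv Y x - b * deriv (deriv (deriv Y)) x)"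
      unfolding AY_def using C1P_diff[OF 1(1) 2(1)] 1(2) 2(2) by auto
  qed
  have B1: "C1P (\<lambda>x. X x * deriv z x)" "C1P (\<lambda>x. deriv X x * z x)"
    using C1P_mult[OF x(1) zz(2)] C1P_mult[OF x(2) zz(1)] by auto
  have B: "C1P (vf_bracket X z)"
    unfolding vf_bracket_def using C1P_diff[OF B1] by auto
  have AYX: "C1P (\<lambda>x. AY x * X x)" "deriv (\<lambda>x. AY x * X x) = (\<lambda>x. deriv AY x * X x + AY x * deriv X x)"
    using C1P_mult[OF AY(1) x(1)] by auto
  have c: "continuous_on UNIV X" "continuous_on UNIV (deriv X)" "continuous_on UNIV AY" "continuous_on UNIV (deriv AY)"
     "continuous_on UNIV z" "continuous_on UNIV (deriv z)"
    using x(1,2) AY(1) zz(1,2) C1P_cont C1P_def by auto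
  have "H1_inner a b (vf_bracket X z) Y = H1_inner a b Y (vf_bracket X z)" by (rule H1_sym)
  also have "\<dots> = integral {0..1} (\<lambda>x. AY x * vf_bracket X z x)"
    unfolding AY_def by (rule K1[OF y(1) y(2) B])
  also have "\<dots> = integral {0..1} (\<lambda>x. (AY x * X x) * deriv z x) - integral {0..1} (\<lambda>x. AY x * deriv X x * z x)"
    unfolding vf_bracket_def
    by (subst integral_diff[symmetric]) (auto intro!: cont_int continuous_intros c simp: algebra_simps)
  also have "integral {0..1} (\<lambda>x. (AY x * X x) * deriv z x) = - integral {0..1} (\<lambda>x. deriv (\<lambda>x. AY x * X x) x * z x)"
    by (rule ibp[OF AYX(1) zz(1)])
  also have "- integral {0..1} (\<lambda>x. deriv (\<lambda>x. AY x * X x) x * z x) - integral {0..1} (\<lambda>x. AY x * deriv X x * z x)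
     = - (integral {0..1} (\<lambda>x. deriv (\<lambda>x. AY x * X x) x * z x) + integral {0..1} (\<lambda>x. AY x * deriv X x * z x))"
    by simp
  also have "integral {0..1} (\<lambda>x. deriv (\<lambda>x. AY x * X x) x * z x) + integral {0..1} (\<lambda>x. AY x * deriv X x * z x)
     = integral {0..1} (\<lambda>x. z x * (2 * deriv X x * AY x + X x * deriv AY x))"
    unfolding AYX(2)
    by (subst integral_add[symmetric]) (auto intro!: cont_int continuous_intros c simp: algebra_simps)
  finally show ?thesis unfolding AY(2) unfolding AY_def by simp
qed



lemma smooth_diff_aux:
  "\<forall>f g. smooth_fun f \<and> smooth_fun g \<longrightarrow> (deriv^^n) (\<lambda>x. f x - g x) = (\<lambda>x. (deriv^^n) f x - (deriv^^n) g x)"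
proof (induction n)
  case 0
  then show ?case by simp
next
  case (Suc n)
  show ?case
  proof (intro allI impI)
    fix f g :: "real \<Rightarrow> real"
    assume fg: "smooth_fun f \<and> smooth_fun g"
    have df: "\<And>x. f differentiable (at x)" "\<And>x. g differentiable (at x)"
      using fg unfolding smooth_fun_def by (metis funpow_0)+
    have D: "deriv (\<lambda>x. f x - g x) = (\<lambda>x. deriv f x - deriv g x)"
      by (rule ext, rule DERIV_imp_deriv, intro derivative_intros,
          (use df DERIV_deriv_iff_real_differentiable in blast)+)
    have sd: "smooth_fun (deriv f)" "smooth_fun (deriv g)"
      using fg unfolding smooth_fun_def by (metis comp_apply funpow_Suc_right)+
    have "(deriv^^Suc n) (\<lambda>x. f x - g x) = (deriv^^n) (deriv (\<lambda>x. f x - g x))"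
      by (simp only: funpow_Suc_right comp_apply)
    also have "\<dots> = (\<lambda>x. (deriv^^n) (deriv f) x - (deriv^^n) (deriv g) x)"
      unfolding D using Suc.IH sd by blast
    finally show "(deriv^^Suc n) (\<lambda>x. f x - g x) = (\<lambda>x. (deriv^^Suc n) f x - (deriv^^Suc n) g x)"
      by (simp only: funpow_Suc_right comp_apply)
  qed
qed

lemma vfS1_diff: "vfS1 f \<Longrightarrow> vfS1 g \<Longrightarrow> vfS1 (\<lambda>x. f x - g x)"
proof -
  assume f: "vfS1 f" and g: "vfS1 g"
  have "smooth_fun (\<lambda>x. f x - g x)"
    unfolding smooth_fun_def
  proof (intro allI)
    fix n x
    have "(deriv^^n) (\<lambda>x. f x - g x) = (\<lambda>x. (deriv^^n) f x - (deriv^^n) g x)"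
      using smooth_diff_aux f g unfolding vfS1_def by blast
    moreover have "(deriv^^n) f differentiable (at x)" "(deriv^^n) g differentiable (at x)"
      using f g unfolding vfS1_def smooth_fun_def by auto
    ultimately show "(deriv^^n) (\<lambda>x. f x - g x) differentiable (at x)"
      by (simp add: differentiable_diff)
  qed
  then show ?thesis using f g unfolding vfS1_def by simp
qed

lemma per_nat: "(\<And>x. f (x+1) = f x) \<Longrightarrow> f (x + real n) = f x"
proof (induction n)
  case 0 then show ?case by simp
next
  case (Suc n)
  have "f (x + real (Suc n)) = f ((x + real n) + 1)" by (rule arg_cong[where f=f], simp)
  then show ?case using Suc by simp
qed

lemma per_zero:
  fixes f :: "real \<Rightarrow> real"
  assumes p: "\<And>x. f (x+1) = f x" and z: "\<And>y. y \<in> {0..1} \<Longrightarrow> f y = (0::real)"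
  shows "f x = 0"
proof -
  have fr: "frac x \<in> {0..1}" using frac_lt_1[of x] frac_ge_0[of x] by auto
  show ?thesis
  proof (cases "floor x \<ge> 0")
    case True
    have "x = frac x + real (nat (floor x))" using True by (simp add: frac_def)
    have "f (frac x + real (nat (floor x))) = f (frac x)" by (rule per_nat[of f, OF p])
    then have "f x = f (frac x)" using \<open>x = frac x + real (nat (floor x))\<close> by simp
    then show ?thesis using z fr by simp
  next
    case False
    have "frac x = x + real (nat (- floor x))" using False by (simp add: frac_def)
    have "f (x + real (nat (- floor x))) = f x" by (rule per_nat[of f, OF p])
    then have "f (frac x) = f x" using \<open>frac x = x + real (nat (- floor x))\<close> by simp
    then show ?thesis using z fr by simp
  qed
qed

lemma H1_self_zero:
  assumes a: "a > 0" and b: "b \<ge> 0" and d: "vfS1 d" and h: "H1_inner a b d d = 0"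
  shows "d = (\<lambda>x. 0)"
proof -
  have c: "C1P d" "C1P (deriv d)" using vfS1_all[OF d] by auto
  have cc: "continuous_on UNIV d" "continuous_on UNIV (deriv d)" using c C1P_cont C1P_def by auto
  let ?g = "\<lambda>x. a * d x * d x + b * deriv d x * deriv d x"
  have cg: "continuous_on {0..1} ?g"
    by (rule continuous_on_subset[of UNIV], auto intro!: continuous_intros cc)
  have gi: "(?g has_integral 0) {0..1}"
  proof -
    have "?g integrable_on {0..1}" by (rule integrable_continuous_interval[OF cg])
    then have "(?g has_integral integral {0..1} ?g) {0..1}" by (rule integrable_integral)
    then show ?thesis using h unfolding H1_inner_def by simp
  qed
  have "?g y = 0" if "y \<in> {0..1}" for y
  proof (rule has_integral_0_cbox_imp_0[of 0 1 ?g y])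
    show "continuous_on (cbox 0 1) ?g" using cg by simp
    show "\<And>x. x \<in> box 0 1 \<Longrightarrow> 0 \<le> ?g x" using a b by (simp add: mult.assoc)
    show "(?g has_integral 0) (cbox 0 1)" using gi by simp
    show "box 0 (1::real) \<noteq> {}" by simp
    show "y \<in> cbox 0 1" using that by simp
  qed
  then have "d y = 0" if "y \<in> {0..1}" for y
  proof -
    have "a * d y * d y + b * deriv d y * deriv d y = 0" using that \<open>\<And>y. y \<in> {0..1} \<Longrightarrow> ?g y = 0\<close> by blast
    moreover have "a * d y * d y \<ge> 0" "b * deriv d y * deriv d y \<ge> 0" using a b by (simp_all add: mult.assoc)
    ultimately have "a * (d y * d y) = 0" by (simp only: mult.assoc)
    then have "d y * d y = 0" using a by simp
    then show ?thesis by simp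
  qed
  then show ?thesis using per_zero[of d] C1P_per[OF c(1)] by blast
qed

definition koszul where
  "koszul a b X Y w \<longleftrightarrow> vfS1 w \<and> (\<forall>z. vfS1 z \<longrightarrow>
      2 * H1_inner a b w z = H1_inner a b (vf_bracket X Y) z
                             - H1_inner a b (vf_bracket X z) Y
                             - H1_inner a b (vf_bracket Y z) X)"

lemma H1_diff_left:
  assumes "vfS1 f" "vfS1 g" "vfS1 z"
  shows "H1_inner a b (\<lambda>x. f x - g x) z = H1_inner a b f z - H1_inner a b g z"
proof -
  have cf: "C1P f" "C1P g" "C1P z" using assms vfS1_C1P by auto
  have D: "deriv (\<lambda>x. f x - g x) = (\<lambda>x. deriv f x - deriv g x)" using C1P_diff[OF cf(1,2)] by auto
  have cc: "continuous_on UNIV f" "continuous_on UNIV g" "continuous_on UNIV z"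
    "continuous_on UNIV (deriv f)" "continuous_on UNIV (deriv g)" "continuous_on UNIV (deriv z)"
    using cf C1P_cont C1P_def by auto
  show ?thesis unfolding H1_inner_def D
    by (subst integral_diff[symmetric]) (auto intro!: cont_int continuous_intros cc simp: algebra_simps)
qed

lemma koszul_unique:
  assumes a: "a > 0" and b: "b \<ge> 0" and k1: "koszul a b X Y w1" and k2: "koszul a b X Y w2"
  shows "w1 = w2"
proof -
  have v: "vfS1 w1" "vfS1 w2" using k1 k2 koszul_def by auto
  define d where "d = (\<lambda>x. w1 x - w2 x)"
  have vd: "vfS1 d" unfolding d_def using vfS1_diff v by auto
  have "2 * H1_inner a b w1 d = 2 * H1_inner a b w2 d" using k1 k2 vd unfolding koszul_def by simp
  then have "H1_inner a b d d = 0" unfolding d_def using H1_diff_left[OF v vd[unfolded d_def]] by simp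
  then have "d = (\<lambda>x. 0)" using H1_self_zero a b vd by blast
  show ?thesis
  proof (rule ext)
    fix x
    have "d x = 0" using \<open>d = (\<lambda>x. 0)\<close> by simp
    then show "w1 x = w2 x" unfolding d_def by simp
  qed
qed

lemma LC_from_koszul:
  assumes a: "a > 0" and b: "b \<ge> 0" and k: "koszul a b X Y W"
  shows "LC_conn a b X Y = W"
  unfolding LC_conn_def
  apply (rule the_equality)
  using k koszul_def apply simp
  using koszul_unique[OF a b _ k] koszul_def by blast



lemma vfS1_cont:
  assumes "vfS1 X"
  shows "continuous_on UNIV X" "continuous_on UNIV (deriv X)" "continuous_on UNIV (deriv (deriv X))"
    "continuous_on UNIV (deriv (deriv (deriv X)))"
  using vfS1_all[OF assms] C1P_cont by auto

lemma C1P_mult': "C1P f \<Longrightarrow> C1P g \<Longrightarrow> C1P (\<lambda>x. f x * g x)"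
  using C1P_mult by blast
lemma C1P_mult_d: "C1P f \<Longrightarrow> C1P g \<Longrightarrow> deriv (\<lambda>x. f x * g x) = (\<lambda>x. deriv f x * g x + f x * deriv g x)"
  using C1P_mult by blast
lemma C1P_diff': "C1P f \<Longrightarrow> C1P g \<Longrightarrow> C1P (\<lambda>x. f x - g x)"
  using C1P_diff by blast
lemma C1P_diff_d: "C1P f \<Longrightarrow> C1P g \<Longrightarrow> deriv (\<lambda>x. f x - g x) = (\<lambda>x. deriv f x - deriv g x)"
  using C1P_diff by blast
lemma C1P_add': "C1P f \<Longrightarrow> C1P g \<Longrightarrow> C1P (\<lambda>x. f x + g x)"
  using C1P_add by blast
lemma C1P_add_d: "C1P f \<Longrightarrow> C1P g \<Longrightarrow> deriv (\<lambda>x. f x + g x) = (\<lambda>x. deriv f x + deriv g x)"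
  using C1P_add by blast

lemma bracket_derivs:
  assumes X: "vfS1 X" and Y: "vfS1 Y"
  shows "C1P (vf_bracket X Y)" "C1P (deriv (vf_bracket X Y))"
    "deriv (deriv (vf_bracket X Y)) = (\<lambda>x. deriv X x * deriv (deriv Y) x + X x * deriv (deriv (deriv Y)) x
        - deriv (deriv (deriv X)) x * Y x - deriv (deriv X) x * deriv Y x)"
proof -
  note x = vfS1_all[OF X] and y = vfS1_all[OF Y]
  have m1: "C1P (\<lambda>x. X x * deriv Y x)" "C1P (\<lambda>x. deriv X x * Y x)"
    using C1P_mult' x y by auto
  show B: "C1P (vf_bracket X Y)" unfolding vf_bracket_def using C1P_diff'[OF m1] .
  have DB: "deriv (vf_bracket X Y) = (\<lambda>x. (deriv X x * deriv Y x + X x * deriv (deriv Y) x) - (deriv (deriv X) x * Y x + deriv X x * deriv Y x))"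
    unfolding vf_bracket_def C1P_diff_d[OF m1] C1P_mult_d[OF x(1) y(2)] C1P_mult_d[OF x(2) y(1)] ..
  have p: "C1P (\<lambda>x. deriv X x * deriv Y x)" "C1P (\<lambda>x. X x * deriv (deriv Y) x)"
    "C1P (\<lambda>x. deriv (deriv X) x * Y x)" "C1P (\<lambda>x. deriv X x * deriv Y x)"
    using C1P_mult' x y by auto
  have s1: "C1P (\<lambda>x. deriv X x * deriv Y x + X x * deriv (deriv Y) x)" using C1P_add'[OF p(1,2)] .
  have s2: "C1P (\<lambda>x. deriv (deriv X) x * Y x + deriv X x * deriv Y x)" using C1P_add'[OF p(3,4)] .
  show "C1P (deriv (vf_bracket X Y))" unfolding DB using C1P_diff'[OF s1 s2] .
  show "deriv (deriv (vf_bracket X Y)) = (\<lambda>x. deriv X x * deriv (deriv Y) x + X x * deriv (deriv (deriv Y)) x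
        - deriv (deriv (deriv X)) x * Y x - deriv (deriv X) x * deriv Y x)"
    unfolding DB C1P_diff_d[OF s1 s2] C1P_add_d[OF p(1,2)] C1P_add_d[OF p(3,4)]
      C1P_mult_d[OF x(2) y(2)] C1P_mult_d[OF x(1) y(3)] C1P_mult_d[OF x(3) y(1)]
    by (rule ext) (simp add: algebra_simps)
qed

lemma koszul_intro:
  assumes X: "vfS1 X" and Y: "vfS1 Y" and W: "vfS1 W"
  and P: "\<And>x. 2 * (a * W x - b * deriv (deriv W) x) =
     a * (X x * deriv Y x - deriv X x * Y x)
     - b * (deriv X x * deriv (deriv Y) x + X x * deriv (deriv (deriv Y)) x
        - deriv (deriv (deriv X)) x * Y x - deriv (deriv X) x * deriv Y x)
     + (2 * deriv X x * (a * Y x - b * deriv (deriv Y) x) + X x * (a * deriv Y x - b * deriv (deriv (deriv Y)) x))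
     + (2 * deriv Y x * (a * X x - b * deriv (deriv X) x) + Y x * (a * deriv X x - b * deriv (deriv (deriv X)) x))"
  shows "koszul a b X Y W"
  unfolding koszul_def
proof (intro conjI allI impI W)
  fix z assume z: "vfS1 z"
  note x = vfS1_all[OF X] and y = vfS1_all[OF Y] and w = vfS1_all[OF W] and zz = vfS1_all[OF z]
  note cx = vfS1_cont[OF X] and cy = vfS1_cont[OF Y] and cw = vfS1_cont[OF W] and cz = vfS1_cont[OF z]
  note bd = bracket_derivs[OF X Y]
  have e1: "H1_inner a b W z = integral {0..1} (\<lambda>x. (a * W x - b * deriv (deriv W) x) * z x)"
    by (rule K1[OF w(1) w(2) zz(1)])
  have e2: "H1_inner a b (vf_bracket X Y) z = integral {0..1} (\<lambda>x. (a * (X x * deriv Y x - deriv X x * Y x)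
     - b * (deriv X x * deriv (deriv Y) x + X x * deriv (deriv (deriv Y)) x
        - deriv (deriv (deriv X)) x * Y x - deriv (deriv X) x * deriv Y x)) * z x)"
    using K1[OF bd(1) bd(2) zz(1), of a b] unfolding bd(3) by (simp add: vf_bracket_def)
  have e3: "H1_inner a b (vf_bracket X z) Y = - integral {0..1} (\<lambda>x. z x * (2 * deriv X x * (a * Y x - b * deriv (deriv Y) x)
            + X x * (a * deriv Y x - b * deriv (deriv (deriv Y)) x)))" by (rule K2[OF X Y z])
  have e4: "H1_inner a b (vf_bracket Y z) X = - integral {0..1} (\<lambda>x. z x * (2 * deriv Y x * (a * X x - b * deriv (deriv X) x)
            + Y x * (a * deriv X x - b * deriv (deriv (deriv X)) x)))" by (rule K2[OF Y X z])
  have sum: "integral {0..1} (\<lambda>x. (a * (X x * deriv Y x - deriv X x * Y x)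
     - b * (deriv X x * deriv (deriv Y) x + X x * deriv (deriv (deriv Y)) x
        - deriv (deriv (deriv X)) x * Y x - deriv (deriv X) x * deriv Y x)) * z x)
     + integral {0..1} (\<lambda>x. z x * (2 * deriv X x * (a * Y x - b * deriv (deriv Y) x)
            + X x * (a * deriv Y x - b * deriv (deriv (deriv Y)) x)))
     + integral {0..1} (\<lambda>x. z x * (2 * deriv Y x * (a * X x - b * deriv (deriv X) x)
            + Y x * (a * deriv X x - b * deriv (deriv (deriv X)) x)))
     = integral {0..1} (\<lambda>x. (a * (X x * deriv Y x - deriv X x * Y x)
     - b * (deriv X x * deriv (deriv Y) x + X x * deriv (deriv (deriv Y)) x
        - deriv (deriv (deriv X)) x * Y x - deriv (deriv X) x * deriv Y x)) * z x
     + z x * (2 * deriv X x * (a * Y x - b * deriv (deriv Y) x)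
            + X x * (a * deriv Y x - b * deriv (deriv (deriv Y)) x))
     + z x * (2 * deriv Y x * (a * X x - b * deriv (deriv X) x)
            + Y x * (a * deriv X x - b * deriv (deriv (deriv X)) x)))"
    apply (subst integral_add[symmetric], (auto intro!: cont_int continuous_intros cx cy cz)[2])
    apply (subst integral_add[symmetric], (auto intro!: cont_int continuous_intros cx cy cz)[2])
    by simp
  also have "\<dots> = integral {0..1} (\<lambda>x. 2 * ((a * W x - b * deriv (deriv W) x) * z x))"
  proof (rule integral_cong)
    fix x
    show "(a * (X x * deriv Y x - deriv X x * Y x)
     - b * (deriv X x * deriv (deriv Y) x + X x * deriv (deriv (deriv Y)) x
        - deriv (deriv (deriv X)) x * Y x - deriv (deriv X) x * deriv Y x)) * z x
     + z x * (2 * deriv X x * (a * Y x - b * deriv (deriv Y) x)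
            + X x * (a * deriv Y x - b * deriv (deriv (deriv Y)) x))
     + z x * (2 * deriv Y x * (a * X x - b * deriv (deriv X) x)
            + Y x * (a * deriv X x - b * deriv (deriv (deriv X)) x))
       = 2 * ((a * W x - b * deriv (deriv W) x) * z x)"
      using arg_cong[OF P[of x], of "\<lambda>t. z x * t"] by algebra
  qed
  also have "\<dots> = 2 * integral {0..1} (\<lambda>x. (a * W x - b * deriv (deriv W) x) * z x)"
    by simp
  finally show "2 * H1_inner a b W z = H1_inner a b (vf_bracket X Y) z - H1_inner a b (vf_bracket X z) Y - H1_inner a b (vf_bracket Y z) X"
    unfolding e1 e2 e3 e4 by simp
qed



definition tpf :: "real \<Rightarrow> (nat \<Rightarrow> real) \<Rightarrow> (nat \<Rightarrow> real) \<Rightarrow> real \<Rightarrow> real" where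
  "tpf W al be = (\<lambda>x. al 0 + al 1 * cos (W * x) + be 1 * sin (W * x)
     + al 2 * cos (2 * (W * x)) + be 2 * sin (2 * (W * x))
     + al 3 * cos (3 * (W * x)) + be 3 * sin (3 * (W * x))
     + al 4 * cos (4 * (W * x)) + be 4 * sin (4 * (W * x))
     + al 5 * cos (5 * (W * x)) + be 5 * sin (5 * (W * x)))"

definition tpd_al :: "real \<Rightarrow> (nat \<Rightarrow> real) \<Rightarrow> nat \<Rightarrow> real" where
  "tpd_al W be = (\<lambda>j. real j * W * be j)"
definition tpd_be :: "real \<Rightarrow> (nat \<Rightarrow> real) \<Rightarrow> nat \<Rightarrow> real" where
  "tpd_be W al = (\<lambda>j. - (real j * W * al j))"

lemma tpf_has_deriv: "(tpf W al be has_real_derivative tpf W (tpd_al W be) (tpd_be W al) x) (at x)"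
  unfolding tpf_def tpd_al_def tpd_be_def
  by (rule derivative_eq_intros | simp)+

lemma tpf_deriv: "deriv (tpf W al be) = tpf W (tpd_al W be) (tpd_be W al)"
  by (rule ext, rule DERIV_imp_deriv, rule tpf_has_deriv)

lemma tpf_smooth: "smooth_fun (tpf W al be)"
proof -
  have "\<exists>al' be'. (deriv^^n) (tpf W al be) = tpf W al' be'" for n
  proof (induction n)
    case 0 then show ?case by auto
  next
    case (Suc n)
    then obtain al' be' where "(deriv^^n) (tpf W al be) = tpf W al' be'" by blast
    then show ?case by (auto simp: tpf_deriv)
  qed
  then show ?thesis unfolding smooth_fun_def
    using tpf_has_deriv real_differentiable_def by metis
qed

lemma trig_per:
  assumes W: "W = 2 * pi * real k"
  shows "cos (real m * (W * (x + 1))) = cos (real m * (W * x))"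
        "sin (real m * (W * (x + 1))) = sin (real m * (W * x))"
proof -
  have e: "real m * (W * (x + 1)) = real m * (W * x) + 2 * pi * real (m * k)"
    using W by (simp add: algebra_simps)
  have i: "real (m * k) \<in> \<int>" by simp
  show "cos (real m * (W * (x + 1))) = cos (real m * (W * x))"
    unfolding e cos_add using cos_integer_2pi[OF i] sin_integer_2pi[OF i] by simp
  show "sin (real m * (W * (x + 1))) = sin (real m * (W * x))"
    unfolding e sin_add using cos_integer_2pi[OF i] sin_integer_2pi[OF i] by simp
qed

lemma trig_per_num:
  assumes W: "W = 2 * pi * real k"
  shows "cos (W * (x + 1)) = cos (W * x)" "sin (W * (x + 1)) = sin (W * x)"
    "cos (numeral n * (W * (x + 1))) = cos (numeral n * (W * x))"
    "sin (numeral n * (W * (x + 1))) = sin (numeral n * (W * x))"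
  using trig_per[OF W, of 1 x] trig_per[OF W, of "numeral n" x] by simp_all

lemma tpf_per: assumes W: "W = 2 * pi * real k" shows "tpf W al be (x + 1) = tpf W al be x"
  unfolding tpf_def by (simp only: trig_per_num[OF W])

lemma tpf_vfS1: "W = 2 * pi * real k \<Longrightarrow> vfS1 (tpf W al be)"
  unfolding vfS1_def using tpf_smooth tpf_per by blast

lemma cheb:
  fixes t :: real
  shows "cos (2 * t) = 2 * cos t ^ 2 - 1"
  "sin (2 * t) = 2 * sin t * cos t"
  "cos (3 * t) = 4 * cos t ^ 3 - 3 * cos t"
  "sin (3 * t) = sin t * (4 * cos t ^ 2 - 1)"
  "cos (4 * t) = 8 * cos t ^ 4 - 8 * cos t ^ 2 + 1"
  "sin (4 * t) = sin t * (8 * cos t ^ 3 - 4 * cos t)"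
  "cos (5 * t) = 16 * cos t ^ 5 - 20 * cos t ^ 3 + 5 * cos t"
  "sin (5 * t) = sin t * (16 * cos t ^ 4 - 12 * cos t ^ 2 + 1)"
  "cos (6 * t) = 32 * cos t ^ 6 - 48 * cos t ^ 4 + 18 * cos t ^ 2 - 1"
  "sin (6 * t) = sin t * (32 * cos t ^ 5 - 32 * cos t ^ 3 + 6 * cos t)"
proof -
  have p: "sin t ^ 2 + cos t ^ 2 = 1" by simp
  have c2: "cos (2 * t) = 2 * cos t ^ 2 - 1" by (simp add: cos_double_cos)
  have s2: "sin (2 * t) = 2 * sin t * cos t" by (simp add: sin_double)
  have c3: "cos (3 * t) = 4 * cos t ^ 3 - 3 * cos t"
  proof -
    have e: "3 * t = 2 * t + t" by simp
    have "cos (3 * t) = cos (2 * t) * cos t - sin (2 * t) * sin t" unfolding e by (rule cos_add)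
    then show ?thesis using c2 s2 p by algebra
  qed
  have s3: "sin (3 * t) = sin t * (4 * cos t ^ 2 - 1)"
  proof -
    have e: "3 * t = 2 * t + t" by simp
    have "sin (3 * t) = sin (2 * t) * cos t + cos (2 * t) * sin t" unfolding e by (rule sin_add)
    then show ?thesis using c2 s2 p by algebra
  qed
  have c4: "cos (4 * t) = 8 * cos t ^ 4 - 8 * cos t ^ 2 + 1"
  proof -
    have e: "4 * t = 3 * t + t" by simp
    have "cos (4 * t) = cos (3 * t) * cos t - sin (3 * t) * sin t" unfolding e by (rule cos_add)
    then show ?thesis using c3 s3 p by algebra
  qed
  have s4: "sin (4 * t) = sin t * (8 * cos t ^ 3 - 4 * cos t)"
  proof -
    have e: "4 * t = 3 * t + t" by simp
    have "sin (4 * t) = sin (3 * t) * cos t + cos (3 * t) * sin t" unfolding e by (rule sin_add)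
    then show ?thesis using c3 s3 p by algebra
  qed
  have c5: "cos (5 * t) = 16 * cos t ^ 5 - 20 * cos t ^ 3 + 5 * cos t"
  proof -
    have e: "5 * t = 4 * t + t" by simp
    have "cos (5 * t) = cos (4 * t) * cos t - sin (4 * t) * sin t" unfolding e by (rule cos_add)
    then show ?thesis using c4 s4 p by algebra
  qed
  have s5: "sin (5 * t) = sin t * (16 * cos t ^ 4 - 12 * cos t ^ 2 + 1)"
  proof -
    have e: "5 * t = 4 * t + t" by simp
    have "sin (5 * t) = sin (4 * t) * cos t + cos (4 * t) * sin t" unfolding e by (rule sin_add)
    then show ?thesis using c4 s4 p by algebra
  qed
  have c6: "cos (6 * t) = 32 * cos t ^ 6 - 48 * cos t ^ 4 + 18 * cos t ^ 2 - 1"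
  proof -
    have e: "6 * t = 5 * t + t" by simp
    have "cos (6 * t) = cos (5 * t) * cos t - sin (5 * t) * sin t" unfolding e by (rule cos_add)
    then show ?thesis using c5 s5 p by algebra
  qed
  have s6: "sin (6 * t) = sin t * (32 * cos t ^ 5 - 32 * cos t ^ 3 + 6 * cos t)"
  proof -
    have e: "6 * t = 5 * t + t" by simp
    have "sin (6 * t) = sin (5 * t) * cos t + cos (5 * t) * sin t" unfolding e by (rule sin_add)
    then show ?thesis using c5 s5 p by algebra
  qed
  show "cos (2 * t) = 2 * cos t ^ 2 - 1" "sin (2 * t) = 2 * sin t * cos t"
    "cos (3 * t) = 4 * cos t ^ 3 - 3 * cos t" "sin (3 * t) = sin t * (4 * cos t ^ 2 - 1)"
    "cos (4 * t) = 8 * cos t ^ 4 - 8 * cos t ^ 2 + 1" "sin (4 * t) = sin t * (8 * cos t ^ 3 - 4 * cos t)"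
    "cos (5 * t) = 16 * cos t ^ 5 - 20 * cos t ^ 3 + 5 * cos t"
    "sin (5 * t) = sin t * (16 * cos t ^ 4 - 12 * cos t ^ 2 + 1)"
    "cos (6 * t) = 32 * cos t ^ 6 - 48 * cos t ^ 4 + 18 * cos t ^ 2 - 1"
    "sin (6 * t) = sin t * (32 * cos t ^ 5 - 32 * cos t ^ 3 + 6 * cos t)"
    using c2 s2 c3 s3 c4 s4 c5 s5 c6 s6 by auto
qed



definition Gsin :: "real \<Rightarrow> (nat \<Rightarrow> real) \<Rightarrow> (nat \<Rightarrow> real) \<Rightarrow> real \<Rightarrow> real" where
  "Gsin W al be x = (let iW = 1 / W in
     - al 0 * cos (W * x) * iW
   + al 1 / 2 * (- cos (2 * (W * x)) * iW / 2)
   + be 1 / 2 * (- sin (2 * (W * x)) * iW / 2)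
   + al 2 / 2 * (- cos (3 * (W * x)) * iW / 3 + cos (W * x) * iW)
   + be 2 / 2 * (sin (W * x) * iW - sin (3 * (W * x)) * iW / 3)
   + al 3 / 2 * (- cos (4 * (W * x)) * iW / 4 + cos (2 * (W * x)) * iW / 2)
   + be 3 / 2 * (sin (2 * (W * x)) * iW / 2 - sin (4 * (W * x)) * iW / 4)
   + al 4 / 2 * (- cos (5 * (W * x)) * iW / 5 + cos (3 * (W * x)) * iW / 3)
   + be 4 / 2 * (sin (3 * (W * x)) * iW / 3 - sin (5 * (W * x)) * iW / 5)
   + al 5 / 2 * (- cos (6 * (W * x)) * iW / 6 + cos (4 * (W * x)) * iW / 4)
   + be 5 / 2 * (sin (4 * (W * x)) * iW / 4 - sin (6 * (W * x)) * iW / 6)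
   + be 1 / 2 * x)"

lemma Gsin_deriv:
  assumes W: "W \<noteq> 0"
  shows "(Gsin W al be has_real_derivative (tpf W al be x * sin (W * x))) (at x)"
proof -
  define iW where "iW = 1 / W"
  have wi: "W * iW = 1" using W unfolding iW_def by simp
  have g: "Gsin W al be = (\<lambda>x. - al 0 * cos (W * x) * iW
   + al 1 / 2 * (- cos (2 * (W * x)) * iW / 2)
   + be 1 / 2 * (- sin (2 * (W * x)) * iW / 2)
   + al 2 / 2 * (- cos (3 * (W * x)) * iW / 3 + cos (W * x) * iW)
   + be 2 / 2 * (sin (W * x) * iW - sin (3 * (W * x)) * iW / 3)
   + al 3 / 2 * (- cos (4 * (W * x)) * iW / 4 + cos (2 * (W * x)) * iW / 2)
   + be 3 / 2 * (sin (2 * (W * x)) * iW / 2 - sin (4 * (W * x)) * iW / 4)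
   + al 4 / 2 * (- cos (5 * (W * x)) * iW / 5 + cos (3 * (W * x)) * iW / 3)
   + be 4 / 2 * (sin (3 * (W * x)) * iW / 3 - sin (5 * (W * x)) * iW / 5)
   + al 5 / 2 * (- cos (6 * (W * x)) * iW / 6 + cos (4 * (W * x)) * iW / 4)
   + be 5 / 2 * (sin (4 * (W * x)) * iW / 4 - sin (6 * (W * x)) * iW / 6)
   + be 1 / 2 * x)"
    unfolding Gsin_def iW_def Let_def by simp
  show ?thesis
    unfolding g
    apply (rule derivative_eq_intros refl | simp only: mult_1_right mult_0_right)+
    unfolding tpf_def cheb
    using wi sin_cos_squared_add[of "W * x"] by algebra
qed

lemma int_tpf_sin:
  assumes W: "W = 2 * pi * real k" and k: "k \<ge> 1"
  shows "integral {0..1} (\<lambda>x. tpf W al be x * sin (W * x)) = be 1 / 2"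
proof -
  have W0: "W \<noteq> 0" using W k by simp
  have "((\<lambda>x. tpf W al be x * sin (W * x)) has_integral (Gsin W al be 1 - Gsin W al be 0)) {0..1}"
    apply (rule fundamental_theorem_of_calculus, simp)
    apply (unfold has_real_derivative_iff_has_vector_derivative[symmetric])
    apply (rule DERIV_subset[of _ _ _ UNIV])
    using Gsin_deriv[OF W0] by auto
  moreover have "Gsin W al be 1 - Gsin W al be 0 = be 1 / 2"
    using trig_per_num[OF W, where x=0] unfolding Gsin_def Let_def by simp
  ultimately show ?thesis by (simp add: integral_unique)
qed



definition Li :: "real \<Rightarrow> real \<Rightarrow> real \<Rightarrow> nat \<Rightarrow> real" where
  "Li a b W j = 1 / (a + b * W^2 * (real j)^2)"

lemma Li_prop: "a > 0 \<Longrightarrow> b \<ge> 0 \<Longrightarrow> (a + b * W^2 * (real j)^2) * Li a b W j = 1"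
proof -
  assume a: "a > 0" and b: "b \<ge> 0"
  have "a + b * W^2 * (real j)^2 > 0" using a b by (intro add_pos_nonneg mult_nonneg_nonneg) auto
  then show ?thesis unfolding Li_def by simp
qed

lemma Lfacts:
  assumes a: "a > 0" and b: "b \<ge> 0"
  shows "a * Li a b W 0 = 1" "(a + b * W^2) * Li a b W 1 = 1" "(a + b * W^2 * 4) * Li a b W 2 = 1"
    "(a + b * W^2 * 9) * Li a b W 3 = 1" "(a + b * W^2 * 16) * Li a b W 4 = 1"
    "(a + b * W^2 * 25) * Li a b W 5 = 1" "(a + b * W^2) * Li a b W (Suc 0) = 1"
  using Li_prop[OF a b, of W 0] Li_prop[OF a b, of W 1] Li_prop[OF a b, of W 2]
    Li_prop[OF a b, of W 3] Li_prop[OF a b, of W 4] Li_prop[OF a b, of W 5] by simp_all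

definition uf :: "real \<Rightarrow> real \<Rightarrow> real \<Rightarrow> real \<Rightarrow> real \<Rightarrow> real" where
  "uf a b e W = tpf W (\<lambda>j. 0) (\<lambda>j. if j = 1 then (1) else 0)"

definition vf :: "real \<Rightarrow> real \<Rightarrow> real \<Rightarrow> real \<Rightarrow> real \<Rightarrow> real" where
  "vf a b e W = tpf W (\<lambda>j. if j = 0 then (1) else if j = 2 then (1*e) else 0) (\<lambda>j. 0)"

definition w1f :: "real \<Rightarrow> real \<Rightarrow> real \<Rightarrow> real \<Rightarrow> real \<Rightarrow> real" where
  "w1f a b e W = tpf W (\<lambda>j. 0) (\<lambda>j. if j = 2 then (- 8*b*W^3*e*(Li a b W 2) - 6*a*W*e*(Li a b W 2)) else if j = 4 then (- 12*b*W^3*e^2*(Li a b W 4) - 3*a*W*e^2*(Li a b W 4)) else 0)"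

definition w2f :: "real \<Rightarrow> real \<Rightarrow> real \<Rightarrow> real \<Rightarrow> real \<Rightarrow> real" where
  "w2f a b e W = tpf W (\<lambda>j. if j = 1 then (- (1/2)*W - (3/4)*W*e + (1/2)*b*W^3*(Li a b W 1) - (3/4)*b*W^3*e*(Li a b W 1) + (3/2)*a*W*(Li a b W 1) - (3/4)*a*W*e*(Li a b W 1)) else if j = 3 then ((1/4)*W*e + (21/4)*b*W^3*e*(Li a b W 3) + (9/4)*a*W*e*(Li a b W 3)) else 0) (\<lambda>j. 0)"

definition w3f :: "real \<Rightarrow> real \<Rightarrow> real \<Rightarrow> real \<Rightarrow> real \<Rightarrow> real" where
  "w3f a b e W = tpf W (\<lambda>j. 0) (\<lambda>j. if j = 1 then (6*b*W^4*e*(Li a b W 2) + 6*b^2*W^6*e*(Li a b W 1)*(Li a b W 2) + (9/2)*a*W^2*e*(Li a b W 2) + (21/2)*a*b*W^4*e*(Li a b W 1)*(Li a b W 2) + (9/2)*a^2*W^2*e*(Li a b W 1)*(Li a b W 2)) else if j = 3 then (- 2*b*W^4*e*(Li a b W 2) + 15*b*W^4*e^2*(Li a b W 4) - 42*b^2*W^6*e*(Li a b W 2)*(Li a b W 3) + 117*b^2*W^6*e^2*(Li a b W 3)*(Li a b W 4) - (3/2)*a*W^2*e*(Li a b W 2) + (15/4)*a*W^2*e^2*(Li a b W 4) - (99/2)*a*b*W^4*e*(Li a b W 2)*(Li a b W 3) + (225/4)*a*b*W^4*e^2*(Li a b W 3)*(Li a b W 4) - (27/2)*a^2*W^2*e*(Li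 a b W 2)*(Li a b W 3) + (27/4)*a^2*W^2*e^2*(Li a b W 3)*(Li a b W 4)) else if j = 5 then (- 9*b*W^4*e^2*(Li a b W 4) - 315*b^2*W^6*e^2*(Li a b W 4)*(Li a b W 5) - (9/4)*a*W^2*e^2*(Li a b W 4) - (495/4)*a*b*W^4*e^2*(Li a b W 4)*(Li a b W 5) - (45/4)*a^2*W^2*e^2*(Li a b W 4)*(Li a b W 5)) else 0)"

definition w4f :: "real \<Rightarrow> real \<Rightarrow> real \<Rightarrow> real \<Rightarrow> real \<Rightarrow> real" where
  "w4f a b e W = tpf W (\<lambda>j. 0) (\<lambda>j. if j = 1 then ((1/4)*W^2 - (7/8)*W^2*e^2 + (3/2)*b*W^4*e*(Li a b W 1) - (105/16)*b*W^4*e^2*(Li a b W 3) - (7/16)*b*W^4*e^2*(Li a b W 1) - (1/4)*b^2*W^6*(Li a b W 1)^2 - (147/16)*b^2*W^6*e^2*(Li a b W 1)*(Li a b W 3) + (9/16)*b^2*W^6*e^2*(Li a b W 1)^2 + 3*a*W^2*e*(Li a b W 1) - (45/16)*a*W^2*e^2*(Li a b W 3) - (3/16)*a*W^2*e^2*(Li a b W 1) - (3/2)*a*b*W^4*(Li a b W 1)^2 - (63/8)*a*b*W^4*e^2*(Li a b W 1)*(Li a b W 3) + (9/8)*a*b*W^4*e^2*(Li a b W 1)^2 - (9/4)*a^2*W^2*(Li a b W 1)^2 - (27/16)*a^2*W^2*e^2*(Li a b W 1)*(Li a b W 3) + (9/16)*a^2*W^2*e^2*(Li a b W 1)^2) else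 if j = 3 then (- (1/2)*W^2*e - (3/16)*W^2*e^2 - (69/8)*b*W^4*e*(Li a b W 3) + (1/8)*b*W^4*e*(Li a b W 1) + (63/16)*b*W^4*e^2*(Li a b W 3) - (3/16)*b*W^4*e^2*(Li a b W 1) - (567/8)*b^2*W^6*e*(Li a b W 3)^2 - (21/8)*b^2*W^6*e*(Li a b W 1)*(Li a b W 3) + (63/16)*b^2*W^6*e^2*(Li a b W 1)*(Li a b W 3) - (27/8)*a*W^2*e*(Li a b W 3) + (3/8)*a*W^2*e*(Li a b W 1) + (27/16)*a*W^2*e^2*(Li a b W 3) - (3/16)*a*W^2*e^2*(Li a b W 1) - 54*a*b*W^4*e*(Li a b W 3)^2 - 9*a*b*W^4*e*(Li a b W 1)*(Li a b W 3) + (45/8)*a*b*W^4*e^2*(Li a b W 1)*(Li a b W 3) - (81/8)*a^2*W^2*e*(Li a b W 3)^2 - (27/8)*a^2*W^2*e*(Li a b W 1)*(Li a b W 3) + (27/16)*a^2*W^2*e^2*(Li a b W 1)*(Li a b W 3)) else if j = 5 then (- (1/16)*W^2*e^2 - (95/16)*b*W^4*e^2*(Li a b W 5) - (21/16)*b*W^4*e^2*(Li a b W 3) - (1995/16)*b^2*W^6*e^2*(Li a b W 3)*(Li a b W 5) - (15/16)*a*W^2*e^2*(Li a b W 5) - (9/16)*a*W^2*e^2*(Li a b W 3) - (585/8)*a*b*W^4*e^2*(Li a b W 3)*(Li a b W 5) - (135/16)*a^2*W^2*e^2*(Li a b W 3)*(Li a b W 5)) else 0)"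

definition w5f :: "real \<Rightarrow> real \<Rightarrow> real \<Rightarrow> real \<Rightarrow> real \<Rightarrow> real" where
  "w5f a b e W = tpf W (\<lambda>j. 0) (\<lambda>j. if j = 1 then (- (1/2)*W^2 + (7/4)*W^2*e^2 + (1/2)*b*W^4*(Li a b W 1) + (3/2)*b*W^4*e*(Li a b W 1) + (1/4)*b*W^4*e^2*(Li a b W 1) + (3/2)*a*W^2*(Li a b W 1) + 3*a*W^2*e*(Li a b W 1) + (3/4)*a*W^2*e^2*(Li a b W 1)) else if j = 3 then (1*W^2*e + (3/8)*W^2*e^2 - (3/2)*b*W^4*e*(Li a b W 3) + (63/8)*b*W^4*e^2*(Li a b W 3) + (27/8)*a*W^2*e^2*(Li a b W 3)) else if j = 5 then ((1/8)*W^2*e^2 - (95/8)*b*W^4*e^2*(Li a b W 5) - (15/8)*a*W^2*e^2*(Li a b W 5)) else 0)"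

definition brf :: "real \<Rightarrow> real \<Rightarrow> real \<Rightarrow> real \<Rightarrow> real \<Rightarrow> real" where
  "brf a b e W = tpf W (\<lambda>j. if j = 1 then (- 1*W - (3/2)*W*e) else if j = 3 then ((1/2)*W*e) else 0) (\<lambda>j. 0)"


lemma LC1:
  assumes a: "a > 0" and b: "b > 0" and W: "W = 2 * pi * real k"
  shows "LC_conn a b (vf a b e W) (vf a b e W) = w1f a b e W"
  unfolding vf_def w1f_def
  apply (rule LC_from_koszul[OF a less_imp_le[OF b]])
  apply (rule koszul_intro[OF tpf_vfS1[OF W] tpf_vfS1[OF W] tpf_vfS1[OF W]])
  subgoal for x
    unfolding tpf_deriv
    unfolding tpd_al_def tpd_be_def tpf_def cheb
    apply simp
    using Lfacts[OF a less_imp_le[OF b], of W] sin_cos_squared_add[of "W * x"] by algebra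
  done

lemma LC2:
  assumes a: "a > 0" and b: "b > 0" and W: "W = 2 * pi * real k"
  shows "LC_conn a b (uf a b e W) (vf a b e W) = w2f a b e W"
  unfolding uf_def vf_def w2f_def
  apply (rule LC_from_koszul[OF a less_imp_le[OF b]])
  apply (rule koszul_intro[OF tpf_vfS1[OF W] tpf_vfS1[OF W] tpf_vfS1[OF W]])
  subgoal for x
    unfolding tpf_deriv
    unfolding tpd_al_def tpd_be_def tpf_def cheb
    apply simp
    using Lfacts[OF a less_imp_le[OF b], of W] sin_cos_squared_add[of "W * x"] by algebra
  done

lemma LC3:
  assumes a: "a > 0" and b: "b > 0" and W: "W = 2 * pi * real k"
  shows "LC_conn a b (uf a b e W) (w1f a b e W) = w3f a b e W"
  unfolding uf_def w1f_def w3f_def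
  apply (rule LC_from_koszul[OF a less_imp_le[OF b]])
  apply (rule koszul_intro[OF tpf_vfS1[OF W] tpf_vfS1[OF W] tpf_vfS1[OF W]])
  subgoal for x
    unfolding tpf_deriv
    unfolding tpd_al_def tpd_be_def tpf_def cheb
    apply simp
    using Lfacts[OF a less_imp_le[OF b], of W] sin_cos_squared_add[of "W * x"] by algebra
  done

lemma LC4:
  assumes a: "a > 0" and b: "b > 0" and W: "W = 2 * pi * real k"
  shows "LC_conn a b (vf a b e W) (w2f a b e W) = w4f a b e W"
  unfolding vf_def w2f_def w4f_def
  apply (rule LC_from_koszul[OF a less_imp_le[OF b]])
  apply (rule koszul_intro[OF tpf_vfS1[OF W] tpf_vfS1[OF W] tpf_vfS1[OF W]])
  subgoal for x
    unfolding tpf_deriv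
    unfolding tpd_al_def tpd_be_def tpf_def cheb
    apply simp
    using Lfacts[OF a less_imp_le[OF b], of W] sin_cos_squared_add[of "W * x"] by algebra
  done

lemma LC5:
  assumes a: "a > 0" and b: "b > 0" and W: "W = 2 * pi * real k"
  shows "LC_conn a b (brf a b e W) (vf a b e W) = w5f a b e W"
  unfolding brf_def vf_def w5f_def
  apply (rule LC_from_koszul[OF a less_imp_le[OF b]])
  apply (rule koszul_intro[OF tpf_vfS1[OF W] tpf_vfS1[OF W] tpf_vfS1[OF W]])
  subgoal for x
    unfolding tpf_deriv
    unfolding tpd_al_def tpd_be_def tpf_def cheb
    apply simp
    using Lfacts[OF a less_imp_le[OF b], of W] sin_cos_squared_add[of "W * x"] by algebra
  done

lemma br_eq: "vf_bracket (uf a b e W) (vf a b e W) = brf a b e W"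
  unfolding vf_bracket_def uf_def vf_def brf_def
  apply (rule ext)
  subgoal for x
    unfolding tpf_deriv
    unfolding tpd_al_def tpd_be_def tpf_def cheb
    apply simp
    using sin_cos_squared_add[of "W * x"] by algebra
  done



lemma tpf_minus: "tpf W al be - tpf W al' be' = tpf W (\<lambda>j. al j - al' j) (\<lambda>j. be j - be' j)"
  unfolding tpf_def by (rule ext) (simp add: algebra_simps)

lemma H1_tpf_u:
  assumes W: "W = 2 * pi * real k" and k: "k \<ge> 1"
  shows "H1_inner a b (tpf W al be) (tpf W (\<lambda>j. 0) (\<lambda>j. if j = 1 then 1 else 0)) = (a + b * W^2) * be 1 / 2"
proof -
  let ?u = "tpf W (\<lambda>j. 0) (\<lambda>j. if j = 1 then 1 else 0)"
  have vu: "vfS1 ?u" and vt: "vfS1 (tpf W al be)" using tpf_vfS1[OF W] by auto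
  have "H1_inner a b (tpf W al be) ?u = H1_inner a b ?u (tpf W al be)" by (rule H1_sym)
  also have "\<dots> = integral {0..1} (\<lambda>x. (a * ?u x - b * deriv (deriv ?u) x) * tpf W al be x)"
    using K1 vfS1_all[OF vu] vfS1_all[OF vt] by blast
  also have "\<dots> = integral {0..1} (\<lambda>x. (a + b * W^2) * (tpf W al be x * sin (W * x)))"
  proof (rule integral_cong)
    fix x
    have "a * ?u x - b * deriv (deriv ?u) x = (a + b * W^2) * sin (W * x)"
      unfolding tpf_deriv
      unfolding tpd_al_def tpd_be_def tpf_def by (simp add: algebra_simps power2_eq_square)
    then show "(a * ?u x - b * deriv (deriv ?u) x) * tpf W al be x = (a + b * W^2) * (tpf W al be x * sin (W * x))"
      by simp
  qed
  also have "\<dots> = (a + b * W^2) * be 1 / 2"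
    using int_tpf_sin[OF W k] by simp
  finally show ?thesis .
qed

lemma sec_formula:
  assumes a: "a > 0" and b: "b > 0" and W: "W = 2 * pi * real k" and k: "k \<ge> 1"
  shows "sec_S a b (uf a b e W) (vf a b e W) = (a + b * W^2) * ((1/4)*W^2 - (7/8)*W^2*e^2 - (1/2)*b*W^4*(Li a b W 1) + 6*b*W^4*e*(Li a b W 2) - 3*b*W^4*e*(Li a b W 1) + (105/16)*b*W^4*e^2*(Li a b W 3) + (3/16)*b*W^4*e^2*(Li a b W 1) + (1/4)*b^2*W^6*(Li a b W 1)^2 + 6*b^2*W^6*e*(Li a b W 1)*(Li a b W 2) + (147/16)*b^2*W^6*e^2*(Li a b W 1)*(Li a b W 3) - (9/16)*b^2*W^6*e^2*(Li a b W 1)^2 - (3/2)*a*W^2*(Li a b W 1) + (9/2)*a*W^2*e*(Li a b W 2) - 6*a*W^2*e*(Li a b W 1) + (45/16)*a*W^2*e^2*(Li a b W 3) - (9/16)*a*W^2*e^2*(Li a b W 1) + (3/2)*a*b*W^4*(Li a b W 1)^2 + (21/2)*a*b*W^4*e*(Li a b W 1)*(Li a b W 2) + (63/8)*a*b*W^4*e^2*(Li a b W 1)*(Li a b W 3) - (9/8)*a*b*W^4*e^2*(Li a b W 1)^2 + (9/4)*a^2*W^2*(Li a b W 1)^2 + (9/2)*a^2*W^2*e*(Li a b W 1)*(Li a b W 2) + (27/16)*a^2*W^2*e^2*(Li a b W 1)*(Li a b W 3) - (9/16)*a^2*W^2*e^2*(Li a b W 1)^2) / 2"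
proof -
  have "sec_S a b (uf a b e W) (vf a b e W) = H1_inner a b (w3f a b e W - w4f a b e W - w5f a b e W) (uf a b e W)"
    unfolding sec_S_def curv_R_def LC1[OF a b W] LC2[OF a b W] LC3[OF a b W] LC4[OF a b W] br_eq LC5[OF a b W] ..
  also have "\<dots> = (a + b * W^2) * ((1/4)*W^2 - (7/8)*W^2*e^2 - (1/2)*b*W^4*(Li a b W 1) + 6*b*W^4*e*(Li a b W 2) - 3*b*W^4*e*(Li a b W 1) + (105/16)*b*W^4*e^2*(Li a b W 3) + (3/16)*b*W^4*e^2*(Li a b W 1) + (1/4)*b^2*W^6*(Li a b W 1)^2 + 6*b^2*W^6*e*(Li a b W 1)*(Li a b W 2) + (147/16)*b^2*W^6*e^2*(Li a b W 1)*(Li a b W 3) - (9/16)*b^2*W^6*e^2*(Li a b W 1)^2 - (3/2)*a*W^2*(Li a b W 1) + (9/2)*a*W^2*e*(Li a b W 2) - 6*a*W^2*e*(Li a b W 1) + (45/16)*a*W^2*e^2*(Li a b W 3) - (9/16)*a*W^2*e^2*(Li a b W 1) + (3/2)*a*b*W^4*(Li a b W 1)^2 + (21/2)*a*b*W^4*e*(Li a b W 1)*(Li a b W 2) + (63/8)*a*b*W^4*e^2*(Li a b W 1)*(Li a b W 3) - (9/8)*a*b*W^4*e^2*(Li a b W 1)^2 + (9/4)*a^2*W^2*(Li a b W 1)^2 + (9/2)*a^2*W^2*e*(Li a b W 1)*(Li a b W 2) + (27/16)*a^2*W^2*e^2*(Li a b W 1)*(Li a b W 3) - (9/16)*a^2*W^2*e^2*(Li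 a b W 1)^2) / 2"
    unfolding w3f_def w4f_def w5f_def tpf_minus uf_def H1_tpf_u[OF W k] by (simp add: algebra_simps)
  finally show ?thesis .
qed

lemma sec_formula2:
  assumes a: "a > 0" and b: "b > 0"
  shows "(a + b * W^2) * ((1/4)*W^2 - (7/8)*W^2*e^2 - (1/2)*b*W^4*(Li a b W 1) + 6*b*W^4*e*(Li a b W 2) - 3*b*W^4*e*(Li a b W 1) + (105/16)*b*W^4*e^2*(Li a b W 3) + (3/16)*b*W^4*e^2*(Li a b W 1) + (1/4)*b^2*W^6*(Li a b W 1)^2 + 6*b^2*W^6*e*(Li a b W 1)*(Li a b W 2) + (147/16)*b^2*W^6*e^2*(Li a b W 1)*(Li a b W 3) - (9/16)*b^2*W^6*e^2*(Li a b W 1)^2 - (3/2)*a*W^2*(Li a b W 1) + (9/2)*a*W^2*e*(Li a b W 2) - 6*a*W^2*e*(Li a b W 1) + (45/16)*a*W^2*e^2*(Li a b W 3) - (9/16)*a*W^2*e^2*(Li a b W 1) + (3/2)*a*b*W^4*(Li a b W 1)^2 + (21/2)*a*b*W^4*e*(Li a b W 1)*(Li a b W 2) + (63/8)*a*b*W^4*e^2*(Li a b W 1)*(Li a b W 3) - (9/8)*a*b*W^4*e^2*(Li a b W 1)^2 + (9/4)*a^2*W^2*(Li a b W 1)^2 + (9/2)*a^2*W^2*e*(Li a b W 1)*(Li a b W 2) + (27/16)*a^2*W^2*e^2*(Li a b W 1)*(Li a b W 3) - (9/16)*a^2*W^2*e^2*(Li a b W 1)^2) = 2 * W^2 * (9*(b*W^2)^5*e^2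 - 27*a*(b*W^2)^4*e + (65/4)*a*(b*W^2)^4*e^2 + 18*a^2*(b*W^2)^3 - (87/2)*a^2*(b*W^2)^3*e + (19/2)*a^2*(b*W^2)^3*e^2 + (49/2)*a^3*(b*W^2)^2 - (9/2)*a^3*(b*W^2)^2*e + (15/2)*a^3*(b*W^2)^2*e^2 + 7*a^4*(b*W^2) + (27/2)*a^4*(b*W^2)*e + (13/2)*a^4*(b*W^2)*e^2 + (1/2)*a^5 + (3/2)*a^5*e + (5/4)*a^5*e^2) * Li a b W 1 ^ 2 * Li a b W 2 * Li a b W 3"
proof -
  note L = Lfacts[OF a less_imp_le[OF b], of W]
  have "(a + b * W^2) * ((1/4)*W^2 - (7/8)*W^2*e^2 - (1/2)*b*W^4*(Li a b W 1) + 6*b*W^4*e*(Li a b W 2) - 3*b*W^4*e*(Li a b W 1) + (105/16)*b*W^4*e^2*(Li a b W 3) + (3/16)*b*W^4*e^2*(Li a b W 1) + (1/4)*b^2*W^6*(Li a b W 1)^2 + 6*b^2*W^6*e*(Li a b W 1)*(Li a b W 2) + (147/16)*b^2*W^6*e^2*(Li a b W 1)*(Li a b W 3) - (9/16)*b^2*W^6*e^2*(Li a b W 1)^2 - (3/2)*a*W^2*(Li a b W 1) + (9/2)*a*W^2*e*(Li a b W 2) - 6*a*W^2*e*(Li a b W 1) + (45/16)*a*W^2*e^2*(Li a b W 3) - (9/16)*a*W^2*e^2*(Li a b W 1) + (3/2)*a*b*W^4*(Li a b W 1)^2 + (21/2)*a*b*W^4*e*(Li a b W 1)*(Li a b W 2)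 + (63/8)*a*b*W^4*e^2*(Li a b W 1)*(Li a b W 3) - (9/8)*a*b*W^4*e^2*(Li a b W 1)^2 + (9/4)*a^2*W^2*(Li a b W 1)^2 + (9/2)*a^2*W^2*e*(Li a b W 1)*(Li a b W 2) + (27/16)*a^2*W^2*e^2*(Li a b W 1)*(Li a b W 3) - (9/16)*a^2*W^2*e^2*(Li a b W 1)^2) = ((1/4)*b*W^4*((a + b * W^2) * Li a b W 1)^2*((a + b * W^2 * 4) * Li a b W 2)*((a + b * W^2 * 9) * Li a b W 3) - (7/8)*b*W^4*e^2*((a + b * W^2) * Li a b W 1)^2*((a + b * W^2 * 4) * Li a b W 2)*((a + b * W^2 * 9) * Li a b W 3) - (1/2)*b^2*W^6*(Li a b W 1)*((a + b * W^2) * Li a b W 1)*((a + b * W^2 * 4) * Li a b W 2)*((a + b * W^2 * 9) * Li a b W 3) + 6*b^2*W^6*e*(Li a b W 2)*((a + b * W^2) * Li a b W 1)^2*((a + b * W^2 * 9) * Li a b W 3) - 3*b^2*W^6*e*(Li a b W 1)*((a + b * W^2) * Li a b W 1)*((a + b * W^2 * 4) * Li a b W 2)*((a + b * W^2 * 9) * Li a b W 3) + (105/16)*b^2*W^6*e^2*(Li a b W 3)*((a + b * W^2) * Li a b W 1)^2*((a + b * W^2 * 4) * Li a b W 2) + (3/16)*b^2*W^6*e^2*(Li a b W 1)*((a + b * W^2) * Li a b W 1)*((a + b * W^2 * 4) * Li a b W 2)*((a + b * W^2 * 9) * Li a b W 3) + (1/4)*b^3*W^8*(Li a b W 1)^2*((a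 + b * W^2 * 4) * Li a b W 2)*((a + b * W^2 * 9) * Li a b W 3) + 6*b^3*W^8*e*(Li a b W 1)*(Li a b W 2)*((a + b * W^2) * Li a b W 1)*((a + b * W^2 * 9) * Li a b W 3) + (147/16)*b^3*W^8*e^2*(Li a b W 1)*(Li a b W 3)*((a + b * W^2) * Li a b W 1)*((a + b * W^2 * 4) * Li a b W 2) - (9/16)*b^3*W^8*e^2*(Li a b W 1)^2*((a + b * W^2 * 4) * Li a b W 2)*((a + b * W^2 * 9) * Li a b W 3) + (1/4)*a*W^2*((a + b * W^2) * Li a b W 1)^2*((a + b * W^2 * 4) * Li a b W 2)*((a + b * W^2 * 9) * Li a b W 3) - (7/8)*a*W^2*e^2*((a + b * W^2) * Li a b W 1)^2*((a + b * W^2 * 4) * Li a b W 2)*((a + b * W^2 * 9) * Li a b W 3) - 2*a*b*W^4*(Li a b W 1)*((a + b * W^2) * Li a b W 1)*((a + b * W^2 * 4) * Li a b W 2)*((a + b * W^2 * 9) * Li a b W 3) + (21/2)*a*b*W^4*e*(Li a b W 2)*((a + b * W^2) * Li a b W 1)^2*((a + b * W^2 * 9) * Li a b W 3) - 9*a*b*W^4*e*(Li a b W 1)*((a + b * W^2) * Li a b W 1)*((a + b * W^2 * 4) * Li a b W 2)*((a + b * W^2 * 9) * Li a b W 3) + (75/8)*a*b*W^4*e^2*(Li a b W 3)*((a + b * W^2) * Li a b W 1)^2*((a + b * W^2 * 4) * Li a b W 2) - (3/8)*a*b*W^4*e^2*(Li a b W 1)*((a + b * W^2) * Li a b W 1)*((a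 + b * W^2 * 4) * Li a b W 2)*((a + b * W^2 * 9) * Li a b W 3) + (7/4)*a*b^2*W^6*(Li a b W 1)^2*((a + b * W^2 * 4) * Li a b W 2)*((a + b * W^2 * 9) * Li a b W 3) + (33/2)*a*b^2*W^6*e*(Li a b W 1)*(Li a b W 2)*((a + b * W^2) * Li a b W 1)*((a + b * W^2 * 9) * Li a b W 3) + (273/16)*a*b^2*W^6*e^2*(Li a b W 1)*(Li a b W 3)*((a + b * W^2) * Li a b W 1)*((a + b * W^2 * 4) * Li a b W 2) - (27/16)*a*b^2*W^6*e^2*(Li a b W 1)^2*((a + b * W^2 * 4) * Li a b W 2)*((a + b * W^2 * 9) * Li a b W 3) - (3/2)*a^2*W^2*(Li a b W 1)*((a + b * W^2) * Li a b W 1)*((a + b * W^2 * 4) * Li a b W 2)*((a + b * W^2 * 9) * Li a b W 3) + (9/2)*a^2*W^2*e*(Li a b W 2)*((a + b * W^2) * Li a b W 1)^2*((a + b * W^2 * 9) * Li a b W 3) - 6*a^2*W^2*e*(Li a b W 1)*((a + b * W^2) * Li a b W 1)*((a + b * W^2 * 4) * Li a b W 2)*((a + b * W^2 * 9) * Li a b W 3) + (45/16)*a^2*W^2*e^2*(Li a b W 3)*((a + b * W^2) * Li a b W 1)^2*((a + b * W^2 * 4) * Li a b W 2) - (9/16)*a^2*W^2*e^2*(Li a b W 1)*((a + b * W^2) * Li a b W 1)*((a + b * W^2 * 4) * Li a b W 2)*((a + b * W^2 * 9) * Li a b W 3) + (15/4)*a^2*b*W^4*(Li a b W 1)^2*((a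 + b * W^2 * 4) * Li a b W 2)*((a + b * W^2 * 9) * Li a b W 3) + 15*a^2*b*W^4*e*(Li a b W 1)*(Li a b W 2)*((a + b * W^2) * Li a b W 1)*((a + b * W^2 * 9) * Li a b W 3) + (153/16)*a^2*b*W^4*e^2*(Li a b W 1)*(Li a b W 3)*((a + b * W^2) * Li a b W 1)*((a + b * W^2 * 4) * Li a b W 2) - (27/16)*a^2*b*W^4*e^2*(Li a b W 1)^2*((a + b * W^2 * 4) * Li a b W 2)*((a + b * W^2 * 9) * Li a b W 3) + (9/4)*a^3*W^2*(Li a b W 1)^2*((a + b * W^2 * 4) * Li a b W 2)*((a + b * W^2 * 9) * Li a b W 3) + (9/2)*a^3*W^2*e*(Li a b W 1)*(Li a b W 2)*((a + b * W^2) * Li a b W 1)*((a + b * W^2 * 9) * Li a b W 3) + (27/16)*a^3*W^2*e^2*(Li a b W 1)*(Li a b W 3)*((a + b * W^2) * Li a b W 1)*((a + b * W^2 * 4) * Li a b W 2) - (9/16)*a^3*W^2*e^2*(Li a b W 1)^2*((a + b * W^2 * 4) * Li a b W 2)*((a + b * W^2 * 9) * Li a b W 3))"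
    apply (simp only: L(2) L(3) L(4) power_one mult_1_right)
    by algebra
  also have "\<dots> = 2 * W^2 * (9*(b*W^2)^5*e^2 - 27*a*(b*W^2)^4*e + (65/4)*a*(b*W^2)^4*e^2 + 18*a^2*(b*W^2)^3 - (87/2)*a^2*(b*W^2)^3*e + (19/2)*a^2*(b*W^2)^3*e^2 + (49/2)*a^3*(b*W^2)^2 - (9/2)*a^3*(b*W^2)^2*e + (15/2)*a^3*(b*W^2)^2*e^2 + 7*a^4*(b*W^2) + (27/2)*a^4*(b*W^2)*e + (13/2)*a^4*(b*W^2)*e^2 + (1/2)*a^5 + (3/2)*a^5*e + (5/4)*a^5*e^2) * Li a b W 1 ^ 2 * Li a b W 2 * Li a b W 3"
    by algebra
  finally show ?thesis .
qed



lemma neg_prod: "(X::real) < 0 \<Longrightarrow> p > 0 \<Longrightarrow> q > 0 \<Longrightarrow> r > 0 \<Longrightarrow> X * p^2 * q * r < 0"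
proof -
  assume X: "X < 0" and p: "p > 0" and q: "q > 0" and r: "r > 0"
  have "X * p^2 < 0" using X p by (simp add: mult_neg_pos)
  then have "X * p^2 * q < 0" using q by (simp add: mult_neg_pos)
  then show "X * p^2 * q * r < 0" using r by (simp add: mult_neg_pos)
qed

theorem theorem6p3:
  fixes a b :: real
  assumes "a > 0" and "b > 0"
  shows "\<exists>u v. vfS1 u \<and> vfS1 v \<and> sec_S a b u v < 0"
proof -
  have a: "a > 0" and b: "b > 0" using assms by auto
  define k where "k = nat \<lceil>a / b\<rceil> + 1"
  have k1: "k \<ge> 1" unfolding k_def by simp
  have kab: "real k \<ge> a / b" unfolding k_def by linarith
  define W where "W = 2 * pi * real k"
  define e where "e = 3 * a / (2 * b * W^2)"
  define B where "B = b * W^2"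
  have Wpos: "W > 0" unfolding W_def using k1 by simp
  have kk: "real k * real k \<ge> real k" using k1 by simp
  have pi1: "pi \<ge> 1" using pi_gt3 by linarith
  have pi2: "pi * pi \<ge> 1" using mult_mono[OF pi1 pi1] by simp
  have "W^2 = 4 * (pi * pi) * (real k * real k)" unfolding W_def by (simp add: power2_eq_square)
  also have "\<dots> \<ge> 4 * 1 * (real k * real k)"
    by (intro mult_right_mono mult_left_mono pi2) auto
  finally have "W^2 \<ge> 4 * real k" using kk by linarith
  then have "b * W^2 \<ge> b * (4 * real k)" using b by (simp add: mult_left_mono)
  moreover have "b * real k \<ge> a" using kab b by (simp add: pos_divide_le_eq mult.commute)
  ultimately have B4: "B \<ge> 4 * a" unfolding B_def by linarith
  have Bpos: "B > 0" using B4 a by linarith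
  have he: "2 * B * e = 3 * a" unfolding e_def B_def using b Wpos by (simp add: field_simps)
  have NB: "4 * B^2 * (9*(b*W^2)^5*e^2 - 27*a*(b*W^2)^4*e + (65/4)*a*(b*W^2)^4*e^2 + 18*a^2*(b*W^2)^3 - (87/2)*a^2*(b*W^2)^3*e + (19/2)*a^2*(b*W^2)^3*e^2 + (49/2)*a^3*(b*W^2)^2 - (9/2)*a^3*(b*W^2)^2*e + (15/2)*a^3*(b*W^2)^2*e^2 + 7*a^4*(b*W^2) + (27/2)*a^4*(b*W^2)*e + (13/2)*a^4*(b*W^2)*e^2 + (1/2)*a^5 + (3/2)*a^5*e + (5/4)*a^5*e^2) = -9*a^2*B^5 - (67/4)*a^3*B^4 + (173/2)*a^4*B^3 + (301/2)*a^5*B^2 + (135/2)*a^6*B + (45/4)*a^7"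
    unfolding B_def[symmetric] using he by algebra
  define t where "t = B - 4 * a"
  have t0: "t \<ge> 0" unfolding t_def using B4 by simp
  have Pt: "-9*a^2*B^5 - (67/4)*a^3*B^4 + (173/2)*a^4*B^3 + (301/2)*a^5*B^2 + (135/2)*a^6*B + (45/4)*a^7
     = - ((21115/4)*a^7 + (20769/2)*a^6*t + (12359/2)*a^5*t^2 + (3243/2)*a^4*t^3 + (787/4)*a^3*t^4 + 9*a^2*t^5)"
    unfolding t_def by algebra
  have Qpos: "(21115/4)*a^7 + (20769/2)*a^6*t + (12359/2)*a^5*t^2 + (3243/2)*a^4*t^3 + (787/4)*a^3*t^4 + 9*a^2*t^5 > 0"
    using a t0 by (intro add_pos_nonneg mult_pos_pos mult_nonneg_nonneg zero_less_power zero_le_power) auto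
  have "4 * B^2 * (9*(b*W^2)^5*e^2 - 27*a*(b*W^2)^4*e + (65/4)*a*(b*W^2)^4*e^2 + 18*a^2*(b*W^2)^3 - (87/2)*a^2*(b*W^2)^3*e + (19/2)*a^2*(b*W^2)^3*e^2 + (49/2)*a^3*(b*W^2)^2 - (9/2)*a^3*(b*W^2)^2*e + (15/2)*a^3*(b*W^2)^2*e^2 + 7*a^4*(b*W^2) + (27/2)*a^4*(b*W^2)*e + (13/2)*a^4*(b*W^2)*e^2 + (1/2)*a^5 + (3/2)*a^5*e + (5/4)*a^5*e^2) < 0" using NB Pt Qpos by linarith
  then have Nneg: "(9*(b*W^2)^5*e^2 - 27*a*(b*W^2)^4*e + (65/4)*a*(b*W^2)^4*e^2 + 18*a^2*(b*W^2)^3 - (87/2)*a^2*(b*W^2)^3*e + (19/2)*a^2*(b*W^2)^3*e^2 + (49/2)*a^3*(b*W^2)^2 - (9/2)*a^3*(b*W^2)^2*e + (15/2)*a^3*(b*W^2)^2*e^2 + 7*a^4*(b*W^2) + (27/2)*a^4*(b*W^2)*e + (13/2)*a^4*(b*W^2)*e^2 + (1/2)*a^5 + (3/2)*a^5*e + (5/4)*a^5*e^2) < 0" using Bpos by (simp add: mult_less_0_iff)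
  have Lp: "Li a b W j > 0" for j unfolding Li_def using a b by (intro divide_pos_pos add_pos_nonneg) auto
  have S: "sec_S a b (uf a b e W) (vf a b e W) = W^2 * (9*(b*W^2)^5*e^2 - 27*a*(b*W^2)^4*e + (65/4)*a*(b*W^2)^4*e^2 + 18*a^2*(b*W^2)^3 - (87/2)*a^2*(b*W^2)^3*e + (19/2)*a^2*(b*W^2)^3*e^2 + (49/2)*a^3*(b*W^2)^2 - (9/2)*a^3*(b*W^2)^2*e + (15/2)*a^3*(b*W^2)^2*e^2 + 7*a^4*(b*W^2) + (27/2)*a^4*(b*W^2)*e + (13/2)*a^4*(b*W^2)*e^2 + (1/2)*a^5 + (3/2)*a^5*e + (5/4)*a^5*e^2) * Li a b W 1 ^ 2 * Li a b W 2 * Li a b W 3"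
    using sec_formula[OF a b W_def k1, of e] sec_formula2[OF a b, of W e] by simp
  have "W^2 * (9*(b*W^2)^5*e^2 - 27*a*(b*W^2)^4*e + (65/4)*a*(b*W^2)^4*e^2 + 18*a^2*(b*W^2)^3 - (87/2)*a^2*(b*W^2)^3*e + (19/2)*a^2*(b*W^2)^3*e^2 + (49/2)*a^3*(b*W^2)^2 - (9/2)*a^3*(b*W^2)^2*e + (15/2)*a^3*(b*W^2)^2*e^2 + 7*a^4*(b*W^2) + (27/2)*a^4*(b*W^2)*e + (13/2)*a^4*(b*W^2)*e^2 + (1/2)*a^5 + (3/2)*a^5*e + (5/4)*a^5*e^2) < 0" using Nneg Wpos by (simp add: mult_pos_neg)
  then have "W^2 * (9*(b*W^2)^5*e^2 - 27*a*(b*W^2)^4*e + (65/4)*a*(b*W^2)^4*e^2 + 18*a^2*(b*W^2)^3 - (87/2)*a^2*(b*W^2)^3*e + (19/2)*a^2*(b*W^2)^3*e^2 + (49/2)*a^3*(b*W^2)^2 - (9/2)*a^3*(b*W^2)^2*e + (15/2)*a^3*(b*W^2)^2*e^2 + 7*a^4*(b*W^2) + (27/2)*a^4*(b*W^2)*e + (13/2)*a^4*(b*W^2)*e^2 + (1/2)*a^5 + (3/2)*a^5*e + (5/4)*a^5*e^2) * Li a b W 1 ^ 2 * Li a b W 2 * Li a b W 3 < 0"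
    by (rule neg_prod[OF _ Lp Lp Lp])
  then have "sec_S a b (uf a b e W) (vf a b e W) < 0" using S by simp
  moreover have "vfS1 (uf a b e W)" "vfS1 (vf a b e W)" unfolding uf_def vf_def using tpf_vfS1[OF W_def] by auto
  ultimately show ?thesis by blast
qed


end
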